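(* For the root system of type $C_3$ (Bourbaki numbering, $\alpha_3$ long) one has $\partial_3(x_3)=\partial_2\partial_3\partial_2(x_2^3)=\partial_1\partial_2\partial_3\partial_2\partial_1(x_1^5)=1$, and consequently $\partial_1\partial_2\partial_3\partial_2\partial_1\partial_2\partial_3\partial_2\partial_3(x_1^5x_2^3x_3)=1$ and $ud(C_3)=9$. Likewise, for type $C_2$, $ud(C_2)=4$.
   Context: For a semisimple finite root system $\Sigma$ of rank $n$ with simple roots $\alpha_1,\dots,\alpha_n$, Cartan matrix $c_{i,j}=\alpha_j^\vee(\alpha_i)$ and fundamental weights $x_1,\dots,x_n$ with $\alpha_i=\sum_jc_{i,j}x_j$: let $S=\mathbb{Z}[x_1,\dots,x_n]$, $y_i:=x_i-\alpha_i$, $s_i$ the ring automorphism of $S$ with $s_i(x_i)=y_i$, $s_i(x_j)=x_j$ ($j\ne i$), $\partial_i(p)=(p-s_i(p))/(x_i-y_i)$, and for $w\in W$ with reduced word $s_{i_1}\cdots s_{i_l}$, $\partial_w=\partial_{i_1}\circ\cdots\circ\partial_{i_l}$. The unimodular degree $ud(\Sigma)$ is the maximum of $\deg p$ over monic monomials $p\in S$ such that $\partial_w(p)=1$ for some $w\in W$ (the Weyl group). *)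

theory Defs
  imports "HOL-Library.Poly_Mapping"
begin

text \<open>The polynomial ring S = Z[x_1,...,x_n]: a polynomial is a finitely supported
  map from monomials (finitely supported exponent vectors, nat =>0 nat) to integer
  coefficients; multiplication is the convolution product of Poly_Mapping.\<close>

type_synonym mpoly = "(nat \<Rightarrow>\<^sub>0 nat) \<Rightarrow>\<^sub>0 int"

definition const :: "int \<Rightarrow> mpoly" where
  "const a = Poly_Mapping.single 0 a"

text \<open>the variable x_i (fundamental weight)\<close>
definition X :: "nat \<Rightarrow> mpoly" where
  "X i = Poly_Mapping.single (Poly_Mapping.single i 1) 1"

definition monom :: "(nat \<Rightarrow>\<^sub>0 nat) \<Rightarrow> mpoly" where
  "monom m = Poly_Mapping.single m 1"

definition mdeg :: "(nat \<Rightarrow>\<^sub>0 nat) \<Rightarrow> nat" where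
  "mdeg m = (\<Sum>v\<in>Poly_Mapping.keys m. Poly_Mapping.lookup m v)"

definition subst :: "(nat \<Rightarrow> mpoly) \<Rightarrow> mpoly \<Rightarrow> mpoly" where
  "subst \<sigma> p = (\<Sum>m\<in>Poly_Mapping.keys p. const (Poly_Mapping.lookup p m) * (\<Prod>v\<in>Poly_Mapping.keys m. \<sigma> v ^ Poly_Mapping.lookup m v))"

text \<open>Root system data: rank n and Cartan matrix c (indices 1..n),
  c i j = alpha_j^vee(alpha_i); alpha_i = sum_j c_{i,j} x_j.\<close>
definition alpha :: "nat \<Rightarrow> (nat \<Rightarrow> nat \<Rightarrow> int) \<Rightarrow> nat \<Rightarrow> mpoly" where
  "alpha n c i = (\<Sum>j\<in>{1..n}. const (c i j) * X j)"

definition y :: "nat \<Rightarrow> (nat \<Rightarrow> nat \<Rightarrow> int) \<Rightarrow> nat \<Rightarrow> mpoly" where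
  "y n c i = X i - alpha n c i"

definition refl :: "nat \<Rightarrow> (nat \<Rightarrow> nat \<Rightarrow> int) \<Rightarrow> nat \<Rightarrow> mpoly \<Rightarrow> mpoly" where
  "refl n c i = subst (\<lambda>j. if j = i then y n c i else X j)"

definition dd :: "nat \<Rightarrow> (nat \<Rightarrow> nat \<Rightarrow> int) \<Rightarrow> nat \<Rightarrow> mpoly \<Rightarrow> mpoly" where
  "dd n c i p = (THE q. p - refl n c i p = (X i - y n c i) * q)"

definition wact :: "nat \<Rightarrow> (nat \<Rightarrow> nat \<Rightarrow> int) \<Rightarrow> nat list \<Rightarrow> mpoly \<Rightarrow> mpoly" where
  "wact n c ws = foldr (\<lambda>i f. refl n c i \<circ> f) ws id"

definition ddw :: "nat \<Rightarrow> (nat \<Rightarrow> nat \<Rightarrow> int) \<Rightarrow> nat list \<Rightarrow> mpoly \<Rightarrow> mpoly" where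
  "ddw n c ws = foldr (\<lambda>i f. dd n c i \<circ> f) ws id"

definition reduced :: "nat \<Rightarrow> (nat \<Rightarrow> nat \<Rightarrow> int) \<Rightarrow> nat list \<Rightarrow> bool" where
  "reduced n c ws \<longleftrightarrow> set ws \<subseteq> {1..n} \<and>
     (\<forall>vs. set vs \<subseteq> {1..n} \<and> wact n c vs = wact n c ws \<longrightarrow> length ws \<le> length vs)"

text \<open>unimodular degree: maximal degree of a monic monomial p with d_w(p) = 1 for some w in W
  (d_w computed along a reduced word of w)\<close>
definition ud :: "nat \<Rightarrow> (nat \<Rightarrow> nat \<Rightarrow> int) \<Rightarrow> nat" where
  "ud n c = Max {mdeg m | m. \<exists>ws. reduced n c ws \<and> ddw n c ws (monom m) = 1}"

text \<open>Cartan matrices, Bourbaki numbering: C_3 (alpha_3 long), C_2 (alpha_2 long).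
  alpha_1 = 2x_1 - x_2, alpha_2 = -x_1 + 2x_2 - x_3, alpha_3 = -2x_2 + 2x_3 for C_3;
  alpha_1 = 2x_1 - x_2, alpha_2 = -2x_1 + 2x_2 for C_2.\<close>
definition cartanC3 :: "nat \<Rightarrow> nat \<Rightarrow> int" where
  "cartanC3 i j = (if i = j then 2
     else if (i, j) = (1, 2) \<or> (i, j) = (2, 1) \<or> (i, j) = (2, 3) then -1
     else if (i, j) = (3, 2) then -2 else 0)"

definition cartanC2 :: "nat \<Rightarrow> nat \<Rightarrow> int" where
  "cartanC2 i j = (if i = j then 2
     else if (i, j) = (1, 2) then -1
     else if (i, j) = (2, 1) then -2 else 0)"

end

theory Submission
  imports Defs
begin


lemma const_eq: "const a = of_int a"
proof -
  have "(of_int a :: mpoly) = Poly_Mapping.single 0 (of_int a :: int)" by (rule single_of_int[symmetric])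
  then show ?thesis by (simp add: const_def)
qed

definition mon :: "(nat \<Rightarrow> mpoly) \<Rightarrow> (nat \<Rightarrow>\<^sub>0 nat) \<Rightarrow> mpoly" where
  "mon \<sigma> m = (\<Prod>v\<in>Poly_Mapping.keys m. \<sigma> v ^ Poly_Mapping.lookup m v)"

lemma mon_superset:
  assumes "finite S" "Poly_Mapping.keys m \<subseteq> S"
  shows "mon \<sigma> m = (\<Prod>v\<in>S. \<sigma> v ^ Poly_Mapping.lookup m v)"
  unfolding mon_def using assms
  by (intro prod.mono_neutral_left) (auto simp: in_keys_iff)

lemma mon_add: "mon \<sigma> (a + b) = mon \<sigma> a * mon \<sigma> b"
proof -
  let ?S = "Poly_Mapping.keys a \<union> Poly_Mapping.keys b"
  have "mon \<sigma> (a+b) = (\<Prod>v\<in>?S. \<sigma> v ^ Poly_Mapping.lookup (a+b) v)"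
    by (rule mon_superset) (auto simp: keys_add)
  also have "\<dots> = (\<Prod>v\<in>?S. \<sigma> v ^ Poly_Mapping.lookup a v) * (\<Prod>v\<in>?S. \<sigma> v ^ Poly_Mapping.lookup b v)"
    by (simp add: lookup_add power_add prod.distrib)
  also have "\<dots> = mon \<sigma> a * mon \<sigma> b"
    by (simp add: mon_superset[of ?S])
  finally show ?thesis .
qed

lemma mon_zero [simp]: "mon \<sigma> 0 = 1" by (simp add: mon_def)

lemma mon_single [simp]: "mon \<sigma> (Poly_Mapping.single v k) = \<sigma> v ^ k"
  by (cases "k = 0") (simp_all add: mon_def)

lemma subst_alt: "subst \<sigma> p = (\<Sum>m\<in>Poly_Mapping.keys p. of_int (Poly_Mapping.lookup p m) * mon \<sigma> m)"
  by (simp add: subst_def const_eq mon_def)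

lemma subst_superset:
  assumes "finite S" "Poly_Mapping.keys p \<subseteq> S"
  shows "subst \<sigma> p = (\<Sum>m\<in>S. of_int (Poly_Mapping.lookup p m) * mon \<sigma> m)"
  unfolding subst_alt using assms
  by (intro sum.mono_neutral_left) (auto simp: in_keys_iff)

lemma subst_add: "subst \<sigma> (p + q) = subst \<sigma> p + subst \<sigma> q"
proof -
  let ?S = "Poly_Mapping.keys p \<union> Poly_Mapping.keys q"
  have "subst \<sigma> (p+q) = (\<Sum>m\<in>?S. of_int (Poly_Mapping.lookup (p+q) m) * mon \<sigma> m)"
    by (rule subst_superset) (auto simp: keys_add)
  also have "\<dots> = subst \<sigma> p + subst \<sigma> q"
    by (simp add: lookup_add distrib_right sum.distrib subst_superset[of ?S])
  finally show ?thesis .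
qed

lemma subst_diff: "subst \<sigma> (p - q) = subst \<sigma> p - subst \<sigma> q"
proof -
  let ?S = "Poly_Mapping.keys p \<union> Poly_Mapping.keys q"
  have "subst \<sigma> (p-q) = (\<Sum>m\<in>?S. of_int (Poly_Mapping.lookup (p-q) m) * mon \<sigma> m)"
    by (rule subst_superset) (auto simp: keys_diff)
  also have "\<dots> = subst \<sigma> p - subst \<sigma> q"
    by (simp add: lookup_minus left_diff_distrib sum_subtractf subst_superset[of ?S])
  finally show ?thesis .
qed

lemma subst_zero [simp]: "subst \<sigma> 0 = 0" by (simp add: subst_def)

lemma subst_single: "subst \<sigma> (Poly_Mapping.single m c) = of_int c * mon \<sigma> m"
  by (cases "c = 0") (simp_all add: subst_alt)

lemma subst_mult: "subst \<sigma> (p * q) = subst \<sigma> p * subst \<sigma> q"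
proof -
  have "\<forall>q. subst \<sigma> (p * q) = subst \<sigma> p * subst \<sigma> q"
    using subset_UNIV
  proof (induction p rule: frag_induction)
    case zero then show ?case by simp
  next
    case (one x)
    show ?case
    proof
      fix q :: mpoly
      show "subst \<sigma> (frag_of x * q) = subst \<sigma> (frag_of x) * subst \<sigma> q"
        using subset_UNIV
      proof (induction q rule: frag_induction)
        case zero then show ?case by simp
      next
        case (one y) then show ?case by (simp add: mult_single subst_single mon_add)
      next
        case (diff a b) then show ?case by (simp add: right_diff_distrib subst_diff)
      qed
    qed
  next
    case (diff a b) then show ?case by (simp add: left_diff_distrib subst_diff)
  qed
  then show ?thesis by blast
qed

lemma subst_one [simp]: "subst \<sigma> 1 = 1"
  using subst_single[of \<sigma> 0 1] by simp

lemma subst_of_int [simp]: "subst \<sigma> (of_int c) = of_int c"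
  by (metis subst_single mon_zero mult.right_neutral const_def const_eq)

lemma subst_uminus [simp]: "subst \<sigma> (- p) = - subst \<sigma> p"
  using subst_diff[of \<sigma> 0 p] by simp

lemma subst_numeral [simp]: "subst \<sigma> (numeral k) = numeral k"
  using subst_of_int[of \<sigma> "numeral k"] by simp

lemma subst_X [simp]: "subst \<sigma> (X j) = \<sigma> j"
  by (simp add: X_def subst_single)

lemma subst_power [simp]: "subst \<sigma> (p ^ k) = subst \<sigma> p ^ k"
  by (induction k) (simp_all add: subst_mult)

lemma subst_sum: "subst \<sigma> (sum f A) = (\<Sum>a\<in>A. subst \<sigma> (f a))"
  by (induction A rule: infinite_finite_induct) (simp_all add: subst_add)

lemma subst_prod: "subst \<sigma> (prod f A) = (\<Prod>a\<in>A. subst \<sigma> (f a))"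
  by (induction A rule: infinite_finite_induct) (simp_all add: subst_mult)

lemmas subst_simps [simp] = subst_add subst_diff subst_mult subst_sum subst_prod

lemma subst_comp: "subst \<sigma> (subst \<rho> p) = subst (\<lambda>v. subst \<sigma> (\<rho> v)) p"
  by (simp only: subst_alt[of \<rho> p] subst_alt[of "\<lambda>v. subst \<sigma> (\<rho> v)" p] subst_sum subst_mult subst_of_int mon_def subst_prod subst_power)

lemma X_power: "X a ^ k = Poly_Mapping.single (Poly_Mapping.single a k) 1"
  by (induction k) (simp_all add: X_def mult_single flip: single_add)

lemma mon_X: "mon X m = monom m"
proof (induction m rule: update_induct)
  case const then show ?case by (simp add: monom_def)
next
  case (update f a b)
  have "Poly_Mapping.update a b f = f + Poly_Mapping.single a b"
    using update.hyps by (intro poly_mapping_eqI) (auto simp: Poly_Mapping.lookup_update lookup_add lookup_single in_keys_iff when_def)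
  then show ?case using update.IH
    by (simp add: mon_add X_power monom_def mult_single)
qed

lemma subst_id: "subst X p = p"
  using subset_UNIV by (induction p rule: frag_induction) (simp_all add: subst_single mon_X monom_def)



abbreviation "D n c i \<equiv> X i - y n c i"

lemma D_eq: "D n c i = alpha n c i" by (simp add: y_def)

lemma refl_X: "refl n c i (X j) = (if j = i then y n c i else X j)"
  by (simp add: refl_def)

lemma refl_hom [simp]:
  "refl n c i (p + q) = refl n c i p + refl n c i q"
  "refl n c i (p - q) = refl n c i p - refl n c i q"
  "refl n c i (p * q) = refl n c i p * refl n c i q"
  "refl n c i (p ^ k) = refl n c i p ^ k"
  "refl n c i (of_int a) = of_int a"
  "refl n c i 1 = 1"
  "refl n c i 0 = 0"
  by (simp_all add: refl_def)

definition dvp :: "nat \<Rightarrow> (nat \<Rightarrow> nat \<Rightarrow> int) \<Rightarrow> nat \<Rightarrow> mpoly \<Rightarrow> bool" where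
  "dvp n c i p \<longleftrightarrow> (\<exists>q. p - refl n c i p = D n c i * q)"

lemma dvp_X: "dvp n c i (X j)"
  unfolding dvp_def by (cases "j = i") (auto simp: refl_X intro: exI[of _ 1] exI[of _ 0])

lemma dvp_1: "dvp n c i 1"
  unfolding dvp_def by (auto intro: exI[of _ 0])

lemma dvp_mult: "dvp n c i a \<Longrightarrow> dvp n c i b \<Longrightarrow> dvp n c i (a * b)"
  unfolding dvp_def
proof (elim exE)
  fix qa qb assume a: "a - refl n c i a = D n c i * qa" and b: "b - refl n c i b = D n c i * qb"
  have "a * b - refl n c i (a * b) = (a - refl n c i a) * b + refl n c i a * (b - refl n c i b)"
    by (simp add: algebra_simps)
  also have "\<dots> = D n c i * (qa * b + refl n c i a * qb)"
    by (simp add: a b algebra_simps)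
  finally show "\<exists>q. a * b - refl n c i (a * b) = D n c i * q" by blast
qed

lemma dvp_diff: "dvp n c i a \<Longrightarrow> dvp n c i b \<Longrightarrow> dvp n c i (a - b)"
  unfolding dvp_def
proof (elim exE)
  fix qa qb assume a: "a - refl n c i a = D n c i * qa" and b: "b - refl n c i b = D n c i * qb"
  have "(a - b) - refl n c i (a - b) = (a - refl n c i a) - (b - refl n c i b)"
    by simp
  also have "\<dots> = D n c i * (qa - qb)"
    using a b by (simp add: right_diff_distrib)
  finally have "(a - b) - refl n c i (a - b) = D n c i * (qa - qb)" .
  then show "\<exists>q. (a - b) - refl n c i (a - b) = D n c i * q" by blast
qed

lemma dvp_power: "dvp n c i a \<Longrightarrow> dvp n c i (a ^ k)"
  by (induction k) (simp_all add: dvp_1 dvp_mult)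

lemma dvp_prod: "(\<And>v. v \<in> A \<Longrightarrow> dvp n c i (f v)) \<Longrightarrow> dvp n c i (prod f A)"
  by (induction A rule: infinite_finite_induct) (simp_all add: dvp_1 dvp_mult)

lemma dvp_all: "dvp n c i p"
  using subset_UNIV
proof (induction p rule: frag_induction)
  case zero then show ?case unfolding dvp_def by (auto intro: exI[of _ 0])
next
  case (one x)
  have "frag_of x = mon X x" by (simp add: mon_X monom_def)
  then show ?case by (simp add: mon_def dvp_prod dvp_power dvp_X)
next
  case (diff a b) then show ?case by (rule dvp_diff)
qed

lemma dd_eq:
  assumes "D n c i \<noteq> 0" "p - refl n c i p = D n c i * q"
  shows "dd n c i p = q"
  unfolding dd_def using assms by (intro the_equality) auto

lemma single_mult_int: "(of_int a :: mpoly) * Poly_Mapping.single m 1 = Poly_Mapping.single m a"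
  by (metis const_def const_eq mult_single add_0 mult.right_neutral)

lemma single_inj_1: "k \<noteq> 0 \<Longrightarrow> Poly_Mapping.single x (k::nat) = Poly_Mapping.single i k \<longleftrightarrow> x = i"
  by (metis lookup_single_eq lookup_single_not_eq zero_neq_one)

lemma lookup_alpha:
  assumes "i \<in> {1..n}"
  shows "Poly_Mapping.lookup (alpha n c i) (Poly_Mapping.single i 1) = c i i"
proof -
  have "Poly_Mapping.lookup (alpha n c i) (Poly_Mapping.single i 1)
      = (\<Sum>j\<in>{1..n}. if j = i then c i j else 0)"
    unfolding alpha_def const_eq X_def single_mult_int lookup_sum
    by (intro sum.cong) (auto simp: lookup_single when_def single_inj_1)
  also have "\<dots> = c i i" using assms by simp
  finally show ?thesis .
qed

lemma D_nonzero: "i \<in> {1..n} \<Longrightarrow> c i i \<noteq> 0 \<Longrightarrow> D n c i \<noteq> 0"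
  using lookup_alpha[of i n c] by (auto simp: D_eq)

definition tau :: "mpoly \<Rightarrow> mpoly" where
  "tau = subst (\<lambda>j. X 0 * X j)"

definition H :: "nat \<Rightarrow> mpoly \<Rightarrow> bool" where
  "H d p \<longleftrightarrow> tau p = X 0 ^ d * p"

lemma tau_X [simp]: "tau (X j) = X 0 * X j" by (simp add: tau_def)

lemma refl_X0 [simp]: "i \<noteq> 0 \<Longrightarrow> refl n c i (X 0) = X 0" by (simp add: refl_X)

lemma tau_hom [simp]:
  "tau (p + q) = tau p + tau q" "tau (p - q) = tau p - tau q"
  "tau (p * q) = tau p * tau q" "tau (p ^ k) = tau p ^ k" "tau 1 = 1" "tau 0 = 0"
  by (simp_all add: tau_def)

lemma tau_alpha: "tau (alpha n c i) = X 0 * alpha n c i"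
  by (simp add: tau_def alpha_def const_eq sum_distrib_left algebra_simps)

lemma tau_refl:
  assumes "i \<noteq> 0"
  shows "tau (refl n c i p) = refl n c i (tau p)"
proof -
  have "tau (refl n c i p) = subst (\<lambda>v. tau (if v = i then y n c i else X v)) p"
    by (simp add: tau_def refl_def subst_comp)
  also have "\<dots> = subst (\<lambda>v. refl n c i (X 0 * X v)) p"
    using assms by (intro arg_cong[where f="\<lambda>s. subst s p"] ext)
      (auto simp: refl_X y_def tau_alpha algebra_simps)
  also have "\<dots> = refl n c i (tau p)"
    by (simp add: tau_def refl_def subst_comp)
  finally show ?thesis .
qed

lemma X0_power: "X 0 ^ k = Poly_Mapping.single (Poly_Mapping.single 0 k) 1"
  by (rule X_power)

lemma X0_nonzero: "X 0 \<noteq> 0" by (simp add: X_def)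

lemma tau_X0: "tau (X 0) = X 0 * X 0" by (simp add: tau_def)

lemma fixed_zero:
  assumes "X 0 * tau q = q"
  shows "q = 0"
proof -
  have "\<exists>a. q = X 0 ^ k * a" for k
  proof (induction k)
    case 0 then show ?case by simp
  next
    case (Suc k)
    then obtain a where a: "q = X 0 ^ k * a" by blast
    have "q = X 0 * tau q" using assms by simp
    also have "\<dots> = X 0 * ((X 0 * X 0) ^ k * tau a)" by (simp add: a tau_X0)
    also have "\<dots> = X 0 ^ Suc k * (X 0 ^ k * tau a)" by (simp add: power_mult_distrib algebra_simps)
    finally show ?case by blast
  qed
  show ?thesis
  proof (rule ccontr)
    assume "q \<noteq> 0"
    then obtain m where m: "m \<in> Poly_Mapping.keys q" by (metis keys_eq_empty ex_in_conv)
    obtain a where a: "q = X 0 ^ Suc (Poly_Mapping.lookup m 0) * a"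
      using \<open>\<And>k. \<exists>a. q = X 0 ^ k * a\<close> by blast
    have "m \<in> Poly_Mapping.keys (X 0 ^ Suc (Poly_Mapping.lookup m 0) * a)" using m a by simp
    then obtain v where "m = Poly_Mapping.single 0 (Suc (Poly_Mapping.lookup m 0)) + v"
      using keys_mult[of "X 0 ^ Suc (Poly_Mapping.lookup m 0)" a] unfolding X0_power by auto
    then have "Poly_Mapping.lookup m 0 = Suc (Poly_Mapping.lookup m 0) + Poly_Mapping.lookup v 0"
      by (metis lookup_add lookup_single_eq)
    then show False by simp
  qed
qed

lemma H_dd:
  assumes i: "i \<noteq> 0" and Dn: "D n c i \<noteq> 0" and h: "H d p"
  shows "H (d - 1) (dd n c i p)"
proof -
  obtain q where q: "p - refl n c i p = D n c i * q" using dvp_all unfolding dvp_def by blast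
  have ddq: "dd n c i p = q" by (rule dd_eq[OF Dn q])
  have "tau (p - refl n c i p) = X 0 ^ d * (p - refl n c i p)"
    using h i by (simp add: H_def tau_refl right_diff_distrib)
  then have "X 0 * D n c i * tau q = X 0 ^ d * (D n c i * q)"
    unfolding q by (simp add: D_eq tau_alpha)
  then have "D n c i * (X 0 * tau q) = D n c i * (X 0 ^ d * q)"
    by (simp add: algebra_simps)
  then have e: "X 0 * tau q = X 0 ^ d * q" using Dn by simp
  show ?thesis
  proof (cases d)
    case 0
    then have "q = 0" using e fixed_zero by simp
    then show ?thesis by (simp add: ddq H_def)
  next
    case (Suc e')
    then have "X 0 * tau q = X 0 * (X 0 ^ e' * q)" using e by simp
    then have "tau q = X 0 ^ e' * q" using X0_nonzero by simp
    then show ?thesis by (simp add: ddq H_def Suc)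
  qed
qed

lemma ddw_Cons [simp]: "ddw n c (i # ws) p = dd n c i (ddw n c ws p)"
  by (simp add: ddw_def)

lemma ddw_Nil [simp]: "ddw n c [] p = p"
  by (simp add: ddw_def)

lemma H_ddw:
  assumes "\<forall>i\<in>set ws. i \<noteq> 0 \<and> D n c i \<noteq> 0" "H d p"
  shows "H (d - length ws) (ddw n c ws p)"
  using assms
proof (induction ws)
  case Nil then show ?case by simp
next
  case (Cons i ws)
  then have "H (d - length ws - 1) (dd n c i (ddw n c ws p))"
    by (intro H_dd) auto
  then show ?case by simp
qed

lemma H_monom: "H (mdeg m) (monom m)"
proof -
  have "tau (monom m) = (\<Prod>v\<in>Poly_Mapping.keys m. (X 0 * X v) ^ Poly_Mapping.lookup m v)"
    by (simp add: tau_def monom_def subst_single mon_def)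
  also have "\<dots> = X 0 ^ mdeg m * mon X m"
    by (simp add: power_mult_distrib prod.distrib mdeg_def power_sum mon_def)
  finally show ?thesis by (simp add: H_def mon_X)
qed

lemma H_one: assumes "H e 1" shows "e = 0"
proof -
  have "Poly_Mapping.single (Poly_Mapping.single (0::nat) e) (1::int) = Poly_Mapping.single 0 1"
    using assms unfolding H_def X0_power by simp
  then have "Poly_Mapping.single 0 e = (0::nat\<Rightarrow>\<^sub>0nat)"
    by (metis lookup_single_eq lookup_single_not_eq zero_neq_one)
  then show ?thesis by (metis lookup_single_eq lookup_zero)
qed

lemma deg_bound:
  assumes "\<forall>i\<in>set ws. i \<noteq> 0 \<and> D n c i \<noteq> 0" "ddw n c ws (monom m) = 1"
  shows "mdeg m \<le> length ws"
  using H_ddw[OF assms(1) H_monom[of m]] assms(2) H_one by fastforce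



lemma dd_eq_comp:
  assumes "p - refl n c i p = (X i - y n c i) * q" "i \<in> {1..n}" "c i i \<noteq> 0"
  shows "dd n c i p = q"
  using assms D_nonzero dd_eq by blast

lemma refl_numeral [simp]: "refl n c i (numeral k) = numeral k"
  by (simp add: refl_def)

lemma sum3: "(\<Sum>j\<in>{1..3::nat}. f j) = f 1 + f 2 + f 3"
proof -
  have "{1..3::nat} = {1,2,3}" by auto
  then show ?thesis by (simp add: algebra_simps)
qed

lemma sum2: "(\<Sum>j\<in>{1..2::nat}. f j) = f 1 + f 2"
proof -
  have "{1..2::nat} = {1,2}" by auto
  then show ?thesis by (simp add: algebra_simps)
qed

lemma yC3:
  "y 3 cartanC3 1 = X 2 - X 1"
  "y 3 cartanC3 2 = X 1 - X 2 + X 3"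
  "y 3 cartanC3 3 = 2 * X 2 - X 3"
  unfolding y_def alpha_def sum3 const_eq by (simp_all add: cartanC3_def algebra_simps)

lemma yC2:
  "y 2 cartanC2 1 = X 2 - X 1"
  "y 2 cartanC2 2 = 2 * X 1 - X 2"
  unfolding y_def alpha_def sum2 const_eq by (simp_all add: cartanC2_def algebra_simps)

lemma reflC3:
  "refl 3 cartanC3 1 (X 1) = X 2 - X 1" "refl 3 cartanC3 1 (X 2) = X 2" "refl 3 cartanC3 1 (X 3) = X 3"
  "refl 3 cartanC3 2 (X 1) = X 1" "refl 3 cartanC3 2 (X 2) = X 1 - X 2 + X 3" "refl 3 cartanC3 2 (X 3) = X 3"
  "refl 3 cartanC3 3 (X 1) = X 1" "refl 3 cartanC3 3 (X 2) = X 2" "refl 3 cartanC3 3 (X 3) = 2 * X 2 - X 3"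
  unfolding refl_X yC3 by simp_all

lemma reflC2:
  "refl 2 cartanC2 1 (X 1) = X 2 - X 1" "refl 2 cartanC2 1 (X 2) = X 2"
  "refl 2 cartanC2 2 (X 1) = X 1" "refl 2 cartanC2 2 (X 2) = 2 * X 1 - X 2"
  unfolding refl_X yC2 by simp_all

lemmas cartanC3_facts = refl_hom refl_numeral reflC3 yC3
lemmas cartanC2_facts = refl_hom refl_numeral reflC2 yC2

lemma c3a_0: "dd 3 cartanC3 3 (X 3) = (1)"
  by (rule dd_eq_comp, simp only: cartanC3_facts, algebra, simp_all add: cartanC3_def)

lemma c3b_0: "dd 3 cartanC3 2 (X 2 ^ 3) = (X 1 ^ 2 - X 1 * X 2 + 2 * X 1 * X 3 + X 2 ^ 2 - X 2 * X 3 + X 3 ^ 2)"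
  by (rule dd_eq_comp, simp only: cartanC3_facts, algebra, simp_all add: cartanC3_def)

lemma c3b_1: "dd 3 cartanC3 3 (X 1 ^ 2 - X 1 * X 2 + 2 * X 1 * X 3 + X 2 ^ 2 - X 2 * X 3 + X 3 ^ 2) = (2 * X 1 + X 2)"
  by (rule dd_eq_comp, simp only: cartanC3_facts, algebra, simp_all add: cartanC3_def)

lemma c3b_2: "dd 3 cartanC3 2 (2 * X 1 + X 2) = (1)"
  by (rule dd_eq_comp, simp only: cartanC3_facts, algebra, simp_all add: cartanC3_def)

lemma c3c_0: "dd 3 cartanC3 1 (X 1 ^ 5) = (X 1 ^ 4 - 2 * X 1 ^ 3 * X 2 + 4 * X 1 ^ 2 * X 2 ^ 2 - 3 * X 1 * X 2 ^ 3 + X 2 ^ 4)"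
  by (rule dd_eq_comp, simp only: cartanC3_facts, algebra, simp_all add: cartanC3_def)

lemma c3c_1: "dd 3 cartanC3 2 (X 1 ^ 4 - 2 * X 1 ^ 3 * X 2 + 4 * X 1 ^ 2 * X 2 ^ 2 - 3 * X 1 * X 2 ^ 3 + X 2 ^ 4) = (X 1 ^ 2 * X 2 + X 1 ^ 2 * X 3 - X 1 * X 2 ^ 2 - X 1 * X 2 * X 3 + 2 * X 2 ^ 2 * X 3 - 2 * X 2 * X 3 ^ 2 + X 3 ^ 3)"
  by (rule dd_eq_comp, simp only: cartanC3_facts, algebra, simp_all add: cartanC3_def)

lemma c3c_2: "dd 3 cartanC3 3 (X 1 ^ 2 * X 2 + X 1 ^ 2 * X 3 - X 1 * X 2 ^ 2 - X 1 * X 2 * X 3 + 2 * X 2 ^ 2 * X 3 - 2 * X 2 * X 3 ^ 2 + X 3 ^ 3) = (X 1 ^ 2 - X 1 * X 2 + 2 * X 2 ^ 2 - 2 * X 2 * X 3 + X 3 ^ 2)"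
  by (rule dd_eq_comp, simp only: cartanC3_facts, algebra, simp_all add: cartanC3_def)

lemma c3c_3: "dd 3 cartanC3 2 (X 1 ^ 2 - X 1 * X 2 + 2 * X 2 ^ 2 - 2 * X 2 * X 3 + X 3 ^ 2) = (X 1)"
  by (rule dd_eq_comp, simp only: cartanC3_facts, algebra, simp_all add: cartanC3_def)

lemma c3c_4: "dd 3 cartanC3 1 (X 1) = (1)"
  by (rule dd_eq_comp, simp only: cartanC3_facts, algebra, simp_all add: cartanC3_def)

lemma c3d_0: "dd 3 cartanC3 3 (X 1 ^ 5 * X 2 ^ 3 * X 3) = (X 1 ^ 5 * X 2 ^ 3)"
  by (rule dd_eq_comp, simp only: cartanC3_facts, algebra, simp_all add: cartanC3_def)

lemma c3d_1: "dd 3 cartanC3 2 (X 1 ^ 5 * X 2 ^ 3) = (X 1 ^ 7 - X 1 ^ 6 * X 2 + 2 * X 1 ^ 6 * X 3 + X 1 ^ 5 * X 2 ^ 2 - X 1 ^ 5 * X 2 * X 3 + X 1 ^ 5 * X 3 ^ 2)"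
  by (rule dd_eq_comp, simp only: cartanC3_facts, algebra, simp_all add: cartanC3_def)

lemma c3d_2: "dd 3 cartanC3 3 (X 1 ^ 7 - X 1 ^ 6 * X 2 + 2 * X 1 ^ 6 * X 3 + X 1 ^ 5 * X 2 ^ 2 - X 1 ^ 5 * X 2 * X 3 + X 1 ^ 5 * X 3 ^ 2) = (2 * X 1 ^ 6 + X 1 ^ 5 * X 2)"
  by (rule dd_eq_comp, simp only: cartanC3_facts, algebra, simp_all add: cartanC3_def)

lemma c3d_3: "dd 3 cartanC3 2 (2 * X 1 ^ 6 + X 1 ^ 5 * X 2) = (X 1 ^ 5)"
  by (rule dd_eq_comp, simp only: cartanC3_facts, algebra, simp_all add: cartanC3_def)

lemma c3d_4: "dd 3 cartanC3 1 (X 1 ^ 5) = (X 1 ^ 4 - 2 * X 1 ^ 3 * X 2 + 4 * X 1 ^ 2 * X 2 ^ 2 - 3 * X 1 * X 2 ^ 3 + X 2 ^ 4)"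
  by (rule dd_eq_comp, simp only: cartanC3_facts, algebra, simp_all add: cartanC3_def)

lemma c3d_5: "dd 3 cartanC3 2 (X 1 ^ 4 - 2 * X 1 ^ 3 * X 2 + 4 * X 1 ^ 2 * X 2 ^ 2 - 3 * X 1 * X 2 ^ 3 + X 2 ^ 4) = (X 1 ^ 2 * X 2 + X 1 ^ 2 * X 3 - X 1 * X 2 ^ 2 - X 1 * X 2 * X 3 + 2 * X 2 ^ 2 * X 3 - 2 * X 2 * X 3 ^ 2 + X 3 ^ 3)"
  by (rule dd_eq_comp, simp only: cartanC3_facts, algebra, simp_all add: cartanC3_def)

lemma c3d_6: "dd 3 cartanC3 3 (X 1 ^ 2 * X 2 + X 1 ^ 2 * X 3 - X 1 * X 2 ^ 2 - X 1 * X 2 * X 3 + 2 * X 2 ^ 2 * X 3 - 2 * X 2 * X 3 ^ 2 + X 3 ^ 3) = (X 1 ^ 2 - X 1 * X 2 + 2 * X 2 ^ 2 - 2 * X 2 * X 3 + X 3 ^ 2)"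
  by (rule dd_eq_comp, simp only: cartanC3_facts, algebra, simp_all add: cartanC3_def)

lemma c3d_7: "dd 3 cartanC3 2 (X 1 ^ 2 - X 1 * X 2 + 2 * X 2 ^ 2 - 2 * X 2 * X 3 + X 3 ^ 2) = (X 1)"
  by (rule dd_eq_comp, simp only: cartanC3_facts, algebra, simp_all add: cartanC3_def)

lemma c3d_8: "dd 3 cartanC3 1 (X 1) = (1)"
  by (rule dd_eq_comp, simp only: cartanC3_facts, algebra, simp_all add: cartanC3_def)

lemma c2a_0: "dd 2 cartanC2 2 (X 1 ^ 3 * X 2) = (X 1 ^ 3)"
  by (rule dd_eq_comp, simp only: cartanC2_facts, algebra, simp_all add: cartanC2_def)

lemma c2a_1: "dd 2 cartanC2 1 (X 1 ^ 3) = (X 1 ^ 2 - X 1 * X 2 + X 2 ^ 2)"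
  by (rule dd_eq_comp, simp only: cartanC2_facts, algebra, simp_all add: cartanC2_def)

lemma c2a_2: "dd 2 cartanC2 2 (X 1 ^ 2 - X 1 * X 2 + X 2 ^ 2) = (X 1)"
  by (rule dd_eq_comp, simp only: cartanC2_facts, algebra, simp_all add: cartanC2_def)

lemma c2a_3: "dd 2 cartanC2 1 (X 1) = (1)"
  by (rule dd_eq_comp, simp only: cartanC2_facts, algebra, simp_all add: cartanC2_def)



definition lin :: "nat \<Rightarrow> (nat \<Rightarrow> int) \<Rightarrow> mpoly" where
  "lin n L = (\<Sum>k\<in>{1..n}. of_int (L k) * X k)"

definition stp :: "(nat \<Rightarrow> nat \<Rightarrow> int) \<Rightarrow> nat \<Rightarrow> (nat \<Rightarrow> int) \<Rightarrow> (nat \<Rightarrow> int)" where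
  "stp c i L = (\<lambda>k. L k - L i * c i k)"

fun row :: "(nat \<Rightarrow> nat \<Rightarrow> int) \<Rightarrow> nat list \<Rightarrow> nat \<Rightarrow> nat \<Rightarrow> int" where
  "row c [] j = (\<lambda>k. if k = j then 1 else 0)"
| "row c (i # ws) j = stp c i (row c ws j)"

lemma alpha_lin: "alpha n c i = lin n (c i)"
  by (simp add: alpha_def lin_def const_eq)

lemma refl_sum: "refl n c i (sum f A) = (\<Sum>a\<in>A. refl n c i (f a))"
  by (simp add: refl_def)

lemma refl_lin:
  assumes "i \<in> {1..n}"
  shows "refl n c i (lin n L) = lin n (stp c i L)"
proof -
  have "refl n c i (lin n L) = (\<Sum>k\<in>{1..n}. of_int (L k) * X k - (if k = i then of_int (L i) * alpha n c i else 0))"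
    unfolding lin_def refl_sum by (intro sum.cong) (auto simp: refl_X y_def algebra_simps)
  also have "\<dots> = lin n L - of_int (L i) * alpha n c i"
    using assms by (simp add: sum_subtractf lin_def)
  also have "\<dots> = lin n (stp c i L)"
    by (simp add: alpha_lin lin_def stp_def sum_distrib_left sum_subtractf algebra_simps)
  finally show ?thesis .
qed

lemma wact_Cons [simp]: "wact n c (i # ws) p = refl n c i (wact n c ws p)"
  by (simp add: wact_def)

lemma wact_Nil [simp]: "wact n c [] p = p"
  by (simp add: wact_def)

lemma lin_unit:
  assumes "j \<in> {1..n}" shows "lin n (\<lambda>k. if k = j then 1 else 0) = X j"
proof -
  have "lin n (\<lambda>k. if k = j then 1 else 0) = (\<Sum>k\<in>{1..n}. if k = j then X k else 0)"
    unfolding lin_def by (intro sum.cong) auto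
  also have "\<dots> = X j" using assms by simp
  finally show ?thesis .
qed

lemma wact_X_in:
  assumes "set ws \<subseteq> {1..n}" "j \<in> {1..n}"
  shows "wact n c ws (X j) = lin n (row c ws j)"
  using assms by (induction ws) (simp_all add: lin_unit refl_lin)

lemma wact_X_out:
  assumes "set ws \<subseteq> {1..n}" "j \<notin> {1..n}"
  shows "wact n c ws (X j) = X j"
  using assms by (induction ws) (auto simp: refl_X)

lemma wact_subst: "wact n c ws p = subst (\<lambda>j. wact n c ws (X j)) p"
proof (induction ws arbitrary: p)
  case Nil then show ?case by (simp add: subst_id)
next
  case (Cons i ws)
  show ?case by (simp add: Cons.IH[of p] refl_def subst_comp)
qed

definition req :: "nat \<Rightarrow> (nat \<Rightarrow> nat \<Rightarrow> int) \<Rightarrow> nat list \<Rightarrow> nat list \<Rightarrow> bool" where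
  "req n c v w \<longleftrightarrow> (\<forall>j\<in>{1..n}. \<forall>k\<in>{1..n}. row c v j k = row c w j k)"

lemma lin_cong: "(\<forall>k\<in>{1..n}. L k = M k) \<Longrightarrow> lin n L = lin n M"
  by (simp add: lin_def)

lemma req_wact:
  assumes "set v \<subseteq> {1..n}" "set w \<subseteq> {1..n}" "req n c v w"
  shows "wact n c v = wact n c w"
proof
  fix p
  have "(\<lambda>j. wact n c v (X j)) = (\<lambda>j. wact n c w (X j))"
  proof
    fix j show "wact n c v (X j) = wact n c w (X j)"
      using assms by (cases "j \<in> {1..n}") (auto simp: wact_X_in wact_X_out req_def intro: lin_cong)
  qed
  then show "wact n c v p = wact n c w p"
    by (metis wact_subst)
qed

lemma lookup_lin:
  assumes "k \<in> {1..n}"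
  shows "Poly_Mapping.lookup (lin n L) (Poly_Mapping.single k 1) = L k"
proof -
  have "Poly_Mapping.lookup (lin n L) (Poly_Mapping.single k 1)
      = (\<Sum>j\<in>{1..n}. if j = k then L j else 0)"
    unfolding lin_def X_def single_mult_int lookup_sum
    by (intro sum.cong) (auto simp: lookup_single when_def single_inj_1)
  also have "\<dots> = L k" using assms by simp
  finally show ?thesis .
qed

lemma wact_req:
  assumes "set v \<subseteq> {1..n}" "set w \<subseteq> {1..n}" "wact n c v = wact n c w"
  shows "req n c v w"
  unfolding req_def
proof (intro ballI)
  fix j k assume j: "j \<in> {1..n}" and k: "k \<in> {1..n}"
  have "lin n (row c v j) = lin n (row c w j)"
    using assms j by (metis wact_X_in)
  then show "row c v j k = row c w j k"
    by (metis lookup_lin[OF k])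
qed

lemma req_Cons:
  assumes "req n c v w" "i \<in> {1..n}"
  shows "req n c (i # v) (i # w)"
  using assms by (auto simp: req_def stp_def)

lemma req_trans: "req n c u v \<Longrightarrow> req n c v w \<Longrightarrow> req n c u w"
  by (simp add: req_def)

definition matL :: "nat \<Rightarrow> (nat \<Rightarrow> nat \<Rightarrow> int) \<Rightarrow> nat list \<Rightarrow> int list list" where
  "matL n c w = map (\<lambda>j. map (row c w j) [1..<n+1]) [1..<n+1]"

lemma matL_req:
  assumes h: "matL n c v = matL n c w" shows "req n c v w"
  unfolding req_def
proof (intro ballI)
  fix j k assume j: "j \<in> {1..n}" and k: "k \<in> {1..n}"
  have "\<forall>j\<in>set [1..<n+1]. map (row c v j) [1..<n+1] = map (row c w j) [1..<n+1]"
    using h unfolding matL_def map_eq_conv .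
  moreover have "j \<in> set [1..<n+1]" "k \<in> set [1..<n+1]" using j k by auto
  ultimately show "row c v j k = row c w j k" unfolding map_eq_conv by blast
qed

lemma req_matL: "req n c v w \<Longrightarrow> matL n c v = matL n c w"
  unfolding matL_def req_def by (intro map_cong refl) auto

definition closed_table :: "nat \<Rightarrow> (nat \<Rightarrow> nat \<Rightarrow> int) \<Rightarrow> nat list list \<Rightarrow> bool" where
  "closed_table n c T \<longleftrightarrow> [] \<in> set T \<and>
     (\<forall>w\<in>set T. \<forall>i\<in>set [1..<n+1]. \<exists>w'\<in>set T. matL n c (i # w) = matL n c w' \<and> length w' \<le> Suc (length w))"

lemma table_cover:
  assumes "closed_table n c T" "set ws \<subseteq> {1..n}"
  shows "\<exists>w'\<in>set T. req n c ws w' \<and> length w' \<le> length ws"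
  using assms(2)
proof (induction ws)
  case Nil
  then show ?case using assms(1) by (auto simp: closed_table_def req_def intro!: bexI[of _ "[]"])
next
  case (Cons i ws)
  then obtain w' where w': "w' \<in> set T" "req n c ws w'" "length w' \<le> length ws" by auto
  have i: "i \<in> {1..n}" using Cons.prems by auto
  then have "i \<in> set [1..<n+1]" by auto
  then obtain w'' where w'': "w'' \<in> set T" "matL n c (i # w') = matL n c w''" "length w'' \<le> Suc (length w')"
    using assms(1) w'(1) unfolding closed_table_def by blast
  have "req n c (i # ws) w''"
    using req_trans[OF req_Cons[OF w'(2) i] matL_req[OF w''(2)]] .
  then show ?case using w' w'' by auto
qed

lemma reduced_bound:
  assumes "closed_table n c T" "\<forall>w\<in>set T. set w \<subseteq> {1..n} \<and> length w \<le> L" "reduced n c ws"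
  shows "length ws \<le> L"
proof -
  have ws: "set ws \<subseteq> {1..n}" using assms(3) by (simp add: reduced_def)
  obtain w' where w': "w' \<in> set T" "req n c ws w'" "length w' \<le> length ws"
    using table_cover[OF assms(1) ws] by blast
  have "wact n c w' = wact n c ws"
    using req_wact[OF _ ws] w' assms(2) by (metis req_def)
  then have "length ws \<le> length w'"
    using assms(2,3) w'(1) unfolding reduced_def by blast
  then show ?thesis using assms(2) w'(1) by fastforce
qed

lemma reduced_witness:
  assumes "closed_table n c T" "set w0 \<subseteq> {1..n}"
    "\<forall>w\<in>set T. matL n c w = matL n c w0 \<longrightarrow> length w0 \<le> length w"
  shows "reduced n c w0"
  unfolding reduced_def
proof (intro conjI allI impI)
  show "set w0 \<subseteq> {1..n}" by fact
  fix vs assume vs: "set vs \<subseteq> {1..n} \<and> wact n c vs = wact n c w0"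
  then have r: "req n c vs w0" using assms(2) wact_req by blast
  obtain w' where w': "w' \<in> set T" "req n c vs w'" "length w' \<le> length vs"
    using table_cover[OF assms(1)] vs by blast
  have "req n c w' w0"
    using w'(2) r by (auto simp: req_def)
  then have "matL n c w' = matL n c w0"
    by (rule req_matL)
  then show "length w0 \<le> length vs" using assms(3) w' by fastforce
qed



definition T3 :: "nat list list" where
  "T3 = [[], [1], [2], [3], [2, 1], [3, 1], [1, 2], [3, 2], [2, 3], [1, 2, 1], [3, 2, 1], [2, 3, 1], [3, 1, 2], [2, 3, 2], [1, 2, 3], [3, 2, 3], [3, 1, 2, 1], [2, 3, 2, 1], [1, 2, 3, 1], [3, 2, 3, 1], [2, 3, 1, 2], [1, 2, 3, 2], [3, 2, 3, 2], [3, 1, 2, 3], [2, 3, 1, 2, 1], [1, 2, 3, 2, 1], [3, 2, 3, 2, 1], [3, 1, 2, 3, 1], [1, 2, 3, 1, 2], [3, 2, 3, 1, 2], [3, 1, 2, 3, 2], [2, 3, 1, 2, 3], [1, 2, 3, 1, 2, 1], [3, 2, 3, 1, 2, 1], [3, 1, 2, 3, 2, 1], [2, 3, 1, 2, 3, 1], [3, 1, 2, 3, 1, 2], [2, 3, 1, 2, 3, 2], [3, 2, 3, 1, 2, 3], [3, 1, 2, 3, 1, 2, 1], [2, 3, 1, 2, 3, 2, 1], [3, 2, 3, 1, 2, 3, 1], [2, 3, 1, 2, 3, 1, 2], [3, 2, 3, 1, 2, 3, 2], [2, 3, 1, 2, 3, 1, 2, 1], [3, 2, 3, 1, 2, 3,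 2, 1], [3, 2, 3, 1, 2, 3, 1, 2], [3, 2, 3, 1, 2, 3, 1, 2, 1]]"

definition T2 :: "nat list list" where
  "T2 = [[], [1], [2], [2, 1], [1, 2], [1, 2, 1], [2, 1, 2], [2, 1, 2, 1]]"

definition Tr3 :: "(nat list \<times> nat \<times> nat list) list" where
  "Tr3 = [([], 1, [1]), ([], 2, [2]), ([], 3, [3]), ([1], 1, []), ([1], 2, [2, 1]), ([1], 3, [3, 1]), ([2], 1, [1, 2]), ([2], 2, []), ([2], 3, [3, 2]), ([3], 1, [3, 1]), ([3], 2, [2, 3]), ([3], 3, []), ([2, 1], 1, [1, 2, 1]), ([2, 1], 2, [1]), ([2, 1], 3, [3, 2, 1]), ([3, 1], 1, [3]), ([3, 1], 2, [2, 3, 1]), ([3, 1], 3, [1]), ([1, 2], 1, [2]), ([1, 2], 2, [1, 2, 1]), ([1, 2], 3, [3, 1, 2]), ([3, 2], 1, [3, 1, 2]), ([3, 2], 2, [2, 3, 2]), ([3, 2], 3, [2]), ([2, 3], 1, [1, 2, 3]), ([2, 3], 2, [3]), ([2, 3], 3, [3, 2, 3]), ([1, 2, 1], 1, [2, 1]), ([1, 2, 1], 2, [1, 2]), ([1, 2, 1], 3, [3, 1, 2, 1]), ([3, 2, 1], 1, [3, 1, 2, 1]), ([3, 2, 1], 2, [2, 3, 2, 1]), ([3, 2, 1], 3, [2, 1]), ([2, 3, 1], 1, [1, 2, 3, 1]), ([2, 3, 1], 2, [3, 1]), ([2, 3, 1], 3, [3, 2, 3, 1]), ([3, 1, 2],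 1, [3, 2]), ([3, 1, 2], 2, [2, 3, 1, 2]), ([3, 1, 2], 3, [1, 2]), ([2, 3, 2], 1, [1, 2, 3, 2]), ([2, 3, 2], 2, [3, 2]), ([2, 3, 2], 3, [3, 2, 3, 2]), ([1, 2, 3], 1, [2, 3]), ([1, 2, 3], 2, [1, 2, 3, 1]), ([1, 2, 3], 3, [3, 1, 2, 3]), ([3, 2, 3], 1, [3, 1, 2, 3]), ([3, 2, 3], 2, [3, 2, 3, 2]), ([3, 2, 3], 3, [2, 3]), ([3, 1, 2, 1], 1, [3, 2, 1]), ([3, 1, 2, 1], 2, [2, 3, 1, 2, 1]), ([3, 1, 2, 1], 3, [1, 2, 1]), ([2, 3, 2, 1], 1, [1, 2, 3, 2, 1]), ([2, 3, 2, 1], 2, [3, 2, 1]), ([2, 3, 2, 1], 3, [3, 2, 3, 2, 1]), ([1, 2, 3, 1], 1, [2, 3, 1]), ([1, 2, 3, 1], 2, [1, 2, 3]), ([1, 2, 3, 1], 3, [3, 1, 2, 3, 1]), ([3, 2, 3, 1], 1, [3, 1, 2, 3, 1]), ([3, 2, 3, 1], 2, [3, 2, 3, 2, 1]), ([3, 2, 3, 1], 3, [2, 3, 1]), ([2, 3, 1, 2], 1, [1, 2, 3, 1, 2]), ([2, 3, 1, 2], 2, [3, 1, 2]), ([2, 3, 1, 2], 3, [3, 2, 3, 1, 2]), ([1, 2, 3, 2], 1, [2, 3, 2]), ([1, 2, 3, 2], 2, [1, 2, 3, 1, 2]), ([1, 2, 3, 2], 3, [3, 1, 2, 3, 2]),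 ([3, 2, 3, 2], 1, [3, 1, 2, 3, 2]), ([3, 2, 3, 2], 2, [3, 2, 3]), ([3, 2, 3, 2], 3, [2, 3, 2]), ([3, 1, 2, 3], 1, [3, 2, 3]), ([3, 1, 2, 3], 2, [2, 3, 1, 2, 3]), ([3, 1, 2, 3], 3, [1, 2, 3]), ([2, 3, 1, 2, 1], 1, [1, 2, 3, 1, 2, 1]), ([2, 3, 1, 2, 1], 2, [3, 1, 2, 1]), ([2, 3, 1, 2, 1], 3, [3, 2, 3, 1, 2, 1]), ([1, 2, 3, 2, 1], 1, [2, 3, 2, 1]), ([1, 2, 3, 2, 1], 2, [1, 2, 3, 1, 2, 1]), ([1, 2, 3, 2, 1], 3, [3, 1, 2, 3, 2, 1]), ([3, 2, 3, 2, 1], 1, [3, 1, 2, 3, 2, 1]), ([3, 2, 3, 2, 1], 2, [3, 2, 3, 1]), ([3, 2, 3, 2, 1], 3, [2, 3, 2, 1]), ([3, 1, 2, 3, 1], 1, [3, 2, 3, 1]), ([3, 1, 2, 3, 1], 2, [2, 3, 1, 2, 3, 1]), ([3, 1, 2, 3, 1], 3, [1, 2, 3, 1]), ([1, 2, 3, 1, 2], 1, [2, 3, 1, 2]), ([1, 2, 3, 1, 2], 2, [1, 2, 3, 2]), ([1, 2, 3, 1, 2], 3, [3, 1, 2, 3, 1, 2]), ([3, 2, 3, 1, 2], 1, [3, 1, 2, 3, 1, 2]), ([3, 2, 3, 1, 2], 2, [3, 2, 3, 1, 2, 1]), ([3, 2, 3, 1, 2], 3, [2, 3, 1, 2]), ([3,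 1, 2, 3, 2], 1, [3, 2, 3, 2]), ([3, 1, 2, 3, 2], 2, [2, 3, 1, 2, 3, 2]), ([3, 1, 2, 3, 2], 3, [1, 2, 3, 2]), ([2, 3, 1, 2, 3], 1, [2, 3, 1, 2, 3, 2]), ([2, 3, 1, 2, 3], 2, [3, 1, 2, 3]), ([2, 3, 1, 2, 3], 3, [3, 2, 3, 1, 2, 3]), ([1, 2, 3, 1, 2, 1], 1, [2, 3, 1, 2, 1]), ([1, 2, 3, 1, 2, 1], 2, [1, 2, 3, 2, 1]), ([1, 2, 3, 1, 2, 1], 3, [3, 1, 2, 3, 1, 2, 1]), ([3, 2, 3, 1, 2, 1], 1, [3, 1, 2, 3, 1, 2, 1]), ([3, 2, 3, 1, 2, 1], 2, [3, 2, 3, 1, 2]), ([3, 2, 3, 1, 2, 1], 3, [2, 3, 1, 2, 1]), ([3, 1, 2, 3, 2, 1], 1, [3, 2, 3, 2, 1]), ([3, 1, 2, 3, 2, 1], 2, [2, 3, 1, 2, 3, 2, 1]), ([3, 1, 2, 3, 2, 1], 3, [1, 2, 3, 2, 1]), ([2, 3, 1, 2, 3, 1], 1, [2, 3, 1, 2, 3, 2, 1]), ([2, 3, 1, 2, 3, 1], 2, [3, 1, 2, 3, 1]), ([2, 3, 1, 2, 3, 1], 3, [3, 2, 3, 1, 2, 3, 1]), ([3, 1, 2, 3, 1, 2], 1, [3, 2, 3, 1, 2]), ([3, 1, 2, 3, 1, 2], 2, [2, 3, 1, 2, 3, 1, 2]), ([3, 1, 2, 3, 1, 2], 3, [1, 2,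 3, 1, 2]), ([2, 3, 1, 2, 3, 2], 1, [2, 3, 1, 2, 3]), ([2, 3, 1, 2, 3, 2], 2, [3, 1, 2, 3, 2]), ([2, 3, 1, 2, 3, 2], 3, [3, 2, 3, 1, 2, 3, 2]), ([3, 2, 3, 1, 2, 3], 1, [3, 2, 3, 1, 2, 3, 2]), ([3, 2, 3, 1, 2, 3], 2, [3, 2, 3, 1, 2, 3, 1]), ([3, 2, 3, 1, 2, 3], 3, [2, 3, 1, 2, 3]), ([3, 1, 2, 3, 1, 2, 1], 1, [3, 2, 3, 1, 2, 1]), ([3, 1, 2, 3, 1, 2, 1], 2, [2, 3, 1, 2, 3, 1, 2, 1]), ([3, 1, 2, 3, 1, 2, 1], 3, [1, 2, 3, 1, 2, 1]), ([2, 3, 1, 2, 3, 2, 1], 1, [2, 3, 1, 2, 3, 1]), ([2, 3, 1, 2, 3, 2, 1], 2, [3, 1, 2, 3, 2, 1]), ([2, 3, 1, 2, 3, 2, 1], 3, [3, 2, 3, 1, 2, 3, 2, 1]), ([3, 2, 3, 1, 2, 3, 1], 1, [3, 2, 3, 1, 2, 3, 2, 1]), ([3, 2, 3, 1, 2, 3, 1], 2, [3, 2, 3, 1, 2, 3]), ([3, 2, 3, 1, 2, 3, 1], 3, [2, 3, 1, 2, 3, 1]), ([2, 3, 1, 2, 3, 1, 2], 1, [2, 3, 1, 2, 3, 1, 2, 1]), ([2, 3, 1, 2, 3, 1, 2], 2, [3, 1, 2, 3, 1, 2]), ([2, 3, 1, 2, 3, 1, 2], 3, [3, 2, 3, 1,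 2, 3, 1, 2]), ([3, 2, 3, 1, 2, 3, 2], 1, [3, 2, 3, 1, 2, 3]), ([3, 2, 3, 1, 2, 3, 2], 2, [3, 2, 3, 1, 2, 3, 1, 2]), ([3, 2, 3, 1, 2, 3, 2], 3, [2, 3, 1, 2, 3, 2]), ([2, 3, 1, 2, 3, 1, 2, 1], 1, [2, 3, 1, 2, 3, 1, 2]), ([2, 3, 1, 2, 3, 1, 2, 1], 2, [3, 1, 2, 3, 1, 2, 1]), ([2, 3, 1, 2, 3, 1, 2, 1], 3, [3, 2, 3, 1, 2, 3, 1, 2, 1]), ([3, 2, 3, 1, 2, 3, 2, 1], 1, [3, 2, 3, 1, 2, 3, 1]), ([3, 2, 3, 1, 2, 3, 2, 1], 2, [3, 2, 3, 1, 2, 3, 1, 2, 1]), ([3, 2, 3, 1, 2, 3, 2, 1], 3, [2, 3, 1, 2, 3, 2, 1]), ([3, 2, 3, 1, 2, 3, 1, 2], 1, [3, 2, 3, 1, 2, 3, 1, 2, 1]), ([3, 2, 3, 1, 2, 3, 1, 2], 2, [3, 2, 3, 1, 2, 3, 2]), ([3, 2, 3, 1, 2, 3, 1, 2], 3, [2, 3, 1, 2, 3, 1, 2]), ([3, 2, 3, 1, 2, 3, 1, 2, 1], 1, [3, 2, 3, 1, 2, 3, 1, 2]), ([3, 2, 3, 1, 2, 3, 1, 2, 1], 2, [3, 2, 3, 1, 2, 3, 2, 1]), ([3, 2, 3, 1, 2, 3, 1, 2, 1], 3, [2, 3, 1, 2, 3, 1, 2, 1])]"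

definition Tr2 :: "(nat list \<times> nat \<times> nat list) list" where
  "Tr2 = [([], 1, [1]), ([], 2, [2]), ([1], 1, []), ([1], 2, [2, 1]), ([2], 1, [1, 2]), ([2], 2, []), ([2, 1], 1, [1, 2, 1]), ([2, 1], 2, [1]), ([1, 2], 1, [2]), ([1, 2], 2, [2, 1, 2]), ([1, 2, 1], 1, [2, 1]), ([1, 2, 1], 2, [2, 1, 2, 1]), ([2, 1, 2], 1, [2, 1, 2, 1]), ([2, 1, 2], 2, [1, 2]), ([2, 1, 2, 1], 1, [2, 1, 2]), ([2, 1, 2, 1], 2, [1, 2, 1])]"


lemma closed2:
  assumes "[] \<in> set T"
    "\<forall>(w,i,w')\<in>set Tr. w' \<in> set T \<and> length w' \<le> Suc (length w)"
    "\<forall>(w,i,w')\<in>set Tr. matL n c (i # w) = matL n c w'"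
    "\<forall>w\<in>set T. \<forall>i\<in>set [1..<n+1]. (w, i) \<in> set (map (\<lambda>(a,b,_). (a,b)) Tr)"
  shows "closed_table n c T"
  unfolding closed_table_def
proof (intro conjI ballI)
  show "[] \<in> set T" by fact
  fix w i assume "w \<in> set T" "i \<in> set [1..<n+1]"
  then obtain w' where "(w, i, w') \<in> set Tr" using assms(4) by fastforce
  then show "\<exists>w'\<in>set T. matL n c (i # w) = matL n c w' \<and> length w' \<le> Suc (length w)"
    using assms(2,3) by fastforce
qed

lemma T3_closed: "closed_table 3 cartanC3 T3"
proof (rule closed2[where Tr=Tr3])
  show "[] \<in> set T3" by (simp add: T3_def)
  show "\<forall>(w,i,w')\<in>set Tr3. w' \<in> set T3 \<and> length w' \<le> Suc (length w)" by code_simp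
  show "\<forall>(w,i,w')\<in>set Tr3. matL 3 cartanC3 (i # w) = matL 3 cartanC3 w'" by code_simp
  show "\<forall>w\<in>set T3. \<forall>i\<in>set [1..<3+1]. (w, i) \<in> set (map (\<lambda>(a,b,_). (a,b)) Tr3)" by code_simp
qed

lemma T2_closed: "closed_table 2 cartanC2 T2"
proof (rule closed2[where Tr=Tr2])
  show "[] \<in> set T2" by (simp add: T2_def)
  show "\<forall>(w,i,w')\<in>set Tr2. w' \<in> set T2 \<and> length w' \<le> Suc (length w)" by code_simp
  show "\<forall>(w,i,w')\<in>set Tr2. matL 2 cartanC2 (i # w) = matL 2 cartanC2 w'" by code_simp
  show "\<forall>w\<in>set T2. \<forall>i\<in>set [1..<2+1]. (w, i) \<in> set (map (\<lambda>(a,b,_). (a,b)) Tr2)" by code_simp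
qed

lemma T3_words: "\<forall>w\<in>set T3. set w \<subseteq> {1..3} \<and> length w \<le> 9"
  by (simp add: T3_def)

lemma T2_words: "\<forall>w\<in>set T2. set w \<subseteq> {1..2} \<and> length w \<le> 4"
  by (simp add: T2_def)

lemma T3_long: "\<forall>w\<in>set T3. matL 3 cartanC3 w = matL 3 cartanC3 [1, 2, 3, 2, 1, 2, 3, 2, 3] \<longrightarrow> length [1, 2, 3, 2, 1, 2, 3, 2, 3::nat] \<le> length w"
  by code_simp

lemma T2_long: "\<forall>w\<in>set T2. matL 2 cartanC2 w = matL 2 cartanC2 [1, 2, 1, 2] \<longrightarrow> length [1, 2, 1, 2::nat] \<le> length w"
  by code_simp


lemma mdeg_H: assumes "H d (monom m)" shows "mdeg m = d"
proof -
  have "monom m \<noteq> 0" by (simp add: monom_def)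
  then have "X 0 ^ mdeg m = X 0 ^ d"
    using H_monom[of m] assms unfolding H_def by simp
  then have "Poly_Mapping.single (Poly_Mapping.single (0::nat) (mdeg m)) (1::int) = Poly_Mapping.single (Poly_Mapping.single 0 d) 1"
    unfolding X0_power .
  then have "Poly_Mapping.single (0::nat) (mdeg m) = Poly_Mapping.single 0 d"
    by (metis lookup_single_eq lookup_single_not_eq zero_neq_one)
  then show ?thesis by (metis lookup_single_eq)
qed

lemma ud_eq:
  assumes T: "closed_table n c T" and Tw: "\<forall>w\<in>set T. set w \<subseteq> {1..n} \<and> length w \<le> L"
    and cii: "\<forall>i\<in>{1..n}. c i i \<noteq> 0"
    and red: "reduced n c w0" and dw: "ddw n c w0 (monom m0) = 1" and dm: "mdeg m0 = L"
  shows "ud n c = L"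
proof -
  let ?S = "{mdeg m | m. \<exists>ws. reduced n c ws \<and> ddw n c ws (monom m) = 1}"
  have bound: "x \<le> L" if xS: "x \<in> ?S" for x
  proof -
    obtain m ws where x: "x = mdeg m" and r: "reduced n c ws" and d: "ddw n c ws (monom m) = 1"
      using xS by blast
    have ws: "set ws \<subseteq> {1..n}" using r by (simp add: reduced_def)
    have "\<forall>i\<in>set ws. i \<noteq> 0 \<and> D n c i \<noteq> 0"
    proof
      fix i assume "i \<in> set ws"
      then have i: "i \<in> {1..n}" using ws by blast
      then have "c i i \<noteq> 0" using cii by blast
      then show "i \<noteq> 0 \<and> D n c i \<noteq> 0" using D_nonzero[OF i] i by simp
    qed
    then have "mdeg m \<le> length ws" by (rule deg_bound[OF _ d])
    also have "length ws \<le> L" using reduced_bound[OF T Tw r] .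
    finally show ?thesis using x by simp
  qed
  have mem: "L \<in> ?S" unfolding dm[symmetric] using red dw by blast
  have sub: "?S \<subseteq> {..L}" using bound by blast
  have fin: "finite ?S" by (rule finite_subset[OF sub finite_atMost])
  show ?thesis unfolding ud_def
    by (rule Max_eqI[OF fin]) (use bound mem in blast)+
qed
definition "m3 = Poly_Mapping.single (1::nat) (5::nat) + Poly_Mapping.single 2 3 + Poly_Mapping.single 3 1"
definition "m2 = Poly_Mapping.single (1::nat) (3::nat) + Poly_Mapping.single 2 1"

lemma monom_m3: "monom m3 = X 1 ^ 5 * X 2 ^ 3 * X 3"
  unfolding X_power unfolding monom_def m3_def X_def mult_single by simp

lemma monom_m2: "monom m2 = X 1 ^ 3 * X 2"
  unfolding X_power unfolding monom_def m2_def X_def mult_single by simp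

lemma H3: "H 9 (X 1 ^ 5 * X 2 ^ 3 * X 3)"
  unfolding H_def by (simp only: tau_hom tau_X) algebra

lemma H2: "H 4 (X 1 ^ 3 * X 2)"
  unfolding H_def by (simp only: tau_hom tau_X) algebra

theorem mainTheorem6:
  shows "dd 3 cartanC3 3 (X 3) = 1
    \<and> ddw 3 cartanC3 [2, 3, 2] (X 2 ^ 3) = 1
    \<and> ddw 3 cartanC3 [1, 2, 3, 2, 1] (X 1 ^ 5) = 1
    \<and> ddw 3 cartanC3 [1, 2, 3, 2, 1, 2, 3, 2, 3] (X 1 ^ 5 * X 2 ^ 3 * X 3) = 1
    \<and> ud 3 cartanC3 = 9
    \<and> ud 2 cartanC2 = 4"
proof (intro conjI)
  show "dd 3 cartanC3 3 (X 3) = 1" by (rule c3a_0)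
  show "ddw 3 cartanC3 [2, 3, 2] (X 2 ^ 3) = 1"
    by (simp only: ddw_Cons ddw_Nil c3b_0 c3b_1 c3b_2)
  show "ddw 3 cartanC3 [1, 2, 3, 2, 1] (X 1 ^ 5) = 1"
    by (simp only: ddw_Cons ddw_Nil c3c_0 c3c_1 c3c_2 c3c_3 c3c_4)
  show d3: "ddw 3 cartanC3 [1, 2, 3, 2, 1, 2, 3, 2, 3] (X 1 ^ 5 * X 2 ^ 3 * X 3) = 1"
    by (simp only: ddw_Cons ddw_Nil c3d_0 c3d_1 c3d_2 c3d_3 c3d_4 c3d_5 c3d_6 c3d_7 c3d_8)
  have d2: "ddw 2 cartanC2 [1, 2, 1, 2] (X 1 ^ 3 * X 2) = 1"
    by (simp only: ddw_Cons ddw_Nil c2a_0 c2a_1 c2a_2 c2a_3)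
  show "ud 3 cartanC3 = 9"
  proof (rule ud_eq[OF T3_closed T3_words])
    show "\<forall>i\<in>{1..3}. cartanC3 i i \<noteq> 0" by (simp add: cartanC3_def)
    show "reduced 3 cartanC3 [1, 2, 3, 2, 1, 2, 3, 2, 3]"
      by (rule reduced_witness[OF T3_closed _ T3_long]) simp
    show "ddw 3 cartanC3 [1, 2, 3, 2, 1, 2, 3, 2, 3] (monom m3) = 1"
      unfolding monom_m3 by (rule d3)
    show "mdeg m3 = 9" by (rule mdeg_H) (unfold monom_m3, rule H3)
  qed
  show "ud 2 cartanC2 = 4"
  proof (rule ud_eq[OF T2_closed T2_words])
    show "\<forall>i\<in>{1..2}. cartanC2 i i \<noteq> 0" by (simp add: cartanC2_def)
    show "reduced 2 cartanC2 [1, 2, 1, 2]"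
      by (rule reduced_witness[OF T2_closed _ T2_long]) simp
    show "ddw 2 cartanC2 [1, 2, 1, 2] (monom m2) = 1"
      unfolding monom_m2 by (rule d2)
    show "mdeg m2 = 4" by (rule mdeg_H) (unfold monom_m2, rule H2)
  qed
qed


end
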